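(* Let $m\ge 2$ and $n_0\ge 1$. There exist $m+1$ $(Q_{n_0},Q_m)$-saturated graphs $A_1,\dots,A_{m+1}$ such that every $(m-1)$-dimensional subcube of $Q_{n_0}$ is contained in at least one $A_i$. (For instance, $A_i$ may be taken to be any $(Q_{n_0},Q_m)$-saturated graph containing all edges whose lower-weight endpoint has weight congruent modulo $m+1$ to one of $i,i+1,\dots,i+m-2$.)
   Context: $Q_n$ is the hypercube on $\{0,1\}^n$ with edges between vertices differing in exactly one coordinate. The weight of a vertex is its number of coordinates equal to $1$. A subcube of dimension $d$ is a set $\{x: x_j=a_j \ \forall j\in J\}$ with $|J|=n-d$, with its induced edges; a graph contains it if it contains all those edges. A graph $G$ is $(Q_n,Q_m)$-saturated if $G\subseteq Q_n$, $G$ contains no subgraph isomorphic to $Q_m$, and adding any edge of $E(Q_n)\setminus E(G)$ creates such a subgraph. *)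

theory Defs
  imports Main
begin

text \<open>Vertices of Q_n are encoded as subsets of {0..<n} (the set of coordinates equal to 1);
  an edge is the two-element set of its endpoints.\<close>

definition hcube_verts :: "nat \<Rightarrow> nat set set" where
  "hcube_verts n = {x. x \<subseteq> {..<n}}"

definition hcube_edges :: "nat \<Rightarrow> nat set set set" where
  "hcube_edges n = {{x, insert i x} | x i. x \<subseteq> {..<n} \<and> i < n \<and> i \<notin> x}"

definition contains_Qm :: "nat \<Rightarrow> nat \<Rightarrow> nat set set set \<Rightarrow> bool" where
  "contains_Qm n m G \<longleftrightarrow> (\<exists>f :: nat set \<Rightarrow> nat set.
      inj_on f (hcube_verts m) \<and> f ` hcube_verts m \<subseteq> hcube_verts n \<and>
      (\<forall>e \<in> hcube_edges m. f ` e \<in> G))"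

definition saturated :: "nat \<Rightarrow> nat \<Rightarrow> nat set set set \<Rightarrow> bool" where
  "saturated n m G \<longleftrightarrow> G \<subseteq> hcube_edges n \<and> \<not> contains_Qm n m G \<and>
     (\<forall>e \<in> hcube_edges n - G. contains_Qm n m (insert e G))"

text \<open>Edge set of the subcube of Q_n with free coordinates D and fixed part a
  (coordinates outside D equal 1 exactly on a).\<close>
definition subcube_edges :: "nat \<Rightarrow> nat set \<Rightarrow> nat set \<Rightarrow> nat set set set" where
  "subcube_edges n D a = {{x, insert i x} | x i. x \<subseteq> {..<n} \<and> x - D = a \<and> i \<in> D \<and> i \<notin> x}"

definition is_subcube :: "nat \<Rightarrow> nat \<Rightarrow> nat set \<Rightarrow> nat set \<Rightarrow> bool" where
  "is_subcube n d D a \<longleftrightarrow> D \<subseteq> {..<n} \<and> card D = d \<and> a \<subseteq> {..<n} - D"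

end

theory Submission
  imports Defs
begin

definition flip :: "nat set \<Rightarrow> nat \<Rightarrow> nat set" where
  "flip S a = (if a \<in> S then S - {a} else insert a S)"

definition symd :: "nat set \<Rightarrow> nat set \<Rightarrow> nat set" where
  "symd A B = (A - B) \<union> (B - A)"

definition lowgood :: "nat \<Rightarrow> nat \<Rightarrow> nat set \<Rightarrow> bool" where
  "lowgood m r x \<longleftrightarrow> (card x + r) mod (m+1) < m - 1"

definition Gr :: "nat \<Rightarrow> nat \<Rightarrow> nat \<Rightarrow> nat set set set" where
  "Gr n m r = {{x, insert j x} | x j. x \<subseteq> {..<n} \<and> j < n \<and> j \<notin> x \<and> lowgood m r x}"

lemma Gr_sub: "Gr n m r \<subseteq> hcube_edges n"
  unfolding Gr_def hcube_edges_def by blast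

lemma finite_edges: "finite (hcube_edges n)"
proof -
  have "hcube_edges n \<subseteq> Pow (Pow {..<n})"
  proof
    fix e assume "e \<in> hcube_edges n"
    then obtain x i where "e = {x, insert i x}" "x \<subseteq> {..<n}" "i < n"
      unfolding hcube_edges_def by blast
    then show "e \<in> Pow (Pow {..<n})" by blast
  qed
  then show ?thesis by (rule finite_subset) simp
qed

lemma edge_info:
  assumes "{p, q} \<in> hcube_edges n"
  shows "p \<subseteq> {..<n} \<and> q \<subseteq> {..<n} \<and>
    ((\<exists>i. i \<notin> p \<and> q = insert i p) \<or> (\<exists>i. i \<notin> q \<and> p = insert i q))"
proof -
  obtain x i where xi: "{p,q} = {x, insert i x}" "x \<subseteq> {..<n}" "i < n" "i \<notin> x"
    using assms unfolding hcube_edges_def by blast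
  from xi(1) have "(p = x \<and> q = insert i x) \<or> (p = insert i x \<and> q = x)"
    by (simp add: doubleton_eq_iff)
  then show ?thesis using xi by blast
qed

lemma edge_card:
  assumes "{p, q} \<in> hcube_edges n"
  shows "card q = card p + 1 \<or> card p = card q + 1"
proof -
  have f: "finite p" "finite q" using finite_subset[OF _ finite_lessThan] edge_info[OF assms] by blast+
  from edge_info[OF assms] consider (a) i where "i \<notin> p" "q = insert i p"
    | (b) i where "i \<notin> q" "p = insert i q" by blast
  then show ?thesis
  proof cases
    case a then show ?thesis using f by simp
  next
    case b then show ?thesis using f by simp
  qed
qed

lemma edge_up:
  assumes "{p, q} \<in> hcube_edges n" "card q = card p + 1"
  shows "\<exists>i. i \<notin> p \<and> q = insert i p"
proof -
  have f: "finite p" "finite q" using finite_subset[OF _ finite_lessThan] edge_info[OF assms(1)] by blast+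
  from edge_info[OF assms(1)] consider (a) i where "i \<notin> p" "q = insert i p"
    | (b) i where "i \<notin> q" "p = insert i q" by blast
  then show ?thesis
  proof cases
    case a then show ?thesis by blast
  next
    case b
    then have "card p = card q + 1" using f by simp
    then show ?thesis using assms(2) by linarith
  qed
qed

lemma square:
  assumes e1: "{t, y1} \<in> hcube_edges n" and e2: "{t, y2} \<in> hcube_edges n"
    and e3: "{y1, z} \<in> hcube_edges n" and e4: "{y2, z} \<in> hcube_edges n"
    and c1: "card y1 = card t + 1" and c2: "card y2 = card t + 1"
    and ne: "y1 \<noteq> y2" "z \<noteq> t"
  shows "card z = card t + 2"
proof -
  have "t \<subseteq> {..<n}" using edge_info[OF e1] by blast
  have "z \<subseteq> {..<n}" using edge_info[OF e3] by blast
  obtain a where a: "a \<notin> t" "y1 = insert a t" using edge_up[OF e1 c1] by blast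
  obtain b where b: "b \<notin> t" "y2 = insert b t" using edge_up[OF e2 c2] by blast
  have ab: "a \<noteq> b" proof assume "a = b" then show False using a b ne by simp qed
  show ?thesis
  proof (rule ccontr)
    assume nz: "card z \<noteq> card t + 2"
    have "card z = card y1 + 1 \<or> card y1 = card z + 1" using edge_card[OF e3] .
    then have cz: "card y1 = card z + 1" using c1 nz by linarith
    have e3': "{z, y1} \<in> hcube_edges n" by (subst insert_commute) (rule e3)
    obtain i where i: "i \<notin> z" "y1 = insert i z"
      using edge_up[OF e3' cz] by blast
    have "card z = card y2 + 1 \<or> card y2 = card z + 1" using edge_card[OF e4] .
    then have cz2: "card y2 = card z + 1" using c1 c2 cz by linarith
    have e4': "{z, y2} \<in> hcube_edges n" by (subst insert_commute) (rule e4)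
    obtain j where j: "j \<notin> z" "y2 = insert j z"
      using edge_up[OF e4' cz2] by blast
    have "i \<noteq> a"
    proof
      assume ia: "i = a"
      have "z = y1 - {i}" using i by simp
      also have "\<dots> = t" using a ia by simp
      finally show False using ne by simp
    qed
    have "a \<in> y1" using a by simp
    then have "a \<in> z" using i \<open>i \<noteq> a\<close> by simp
    then have "a \<in> y2" using j by simp
    then show False using b ab a by simp
  qed
qed

lemma flip_sub: "S \<subseteq> {..<m} \<Longrightarrow> a < m \<Longrightarrow> flip S a \<subseteq> {..<m}"
  unfolding flip_def by auto

lemma edgeQ:
  assumes "S \<subseteq> {..<m}" "a < m"
  shows "{S, flip S a} \<in> hcube_edges m"
proof (cases "a \<in> S")
  case True
  have "{S, flip S a} = {S - {a}, insert a (S - {a})}"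
    using True unfolding flip_def by auto
  moreover have "S - {a} \<subseteq> {..<m}" using assms by auto
  ultimately show ?thesis unfolding hcube_edges_def using assms(2) by blast
next
  case False
  have "{S, flip S a} = {S, insert a S}"
    using False unfolding flip_def by auto
  then show ?thesis unfolding hcube_edges_def using assms False by blast
qed

lemma symd_flip: "a \<in> symd z x \<Longrightarrow> symd (flip z a) x = symd z x - {a}"
  unfolding symd_def flip_def by auto

lemma symd_empty: "symd z x = {} \<Longrightarrow> z = x"
  unfolding symd_def by auto

lemma symd_symd: "symd (symd x A) x = A"
  unfolding symd_def by auto

lemma symd_insert: "a \<notin> A \<Longrightarrow> symd x (insert a A) = flip (symd x A) a"
  unfolding symd_def flip_def by auto

lemma symd_sub: "x \<subseteq> M \<Longrightarrow> A \<subseteq> M \<Longrightarrow> symd x A \<subseteq> M"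
  unfolding symd_def by auto

lemma flip_comm: "flip (flip z a) b = flip (flip z b) a"
  unfolding flip_def by auto

lemma flip_ne: "a \<noteq> b \<Longrightarrow> flip z a \<noteq> flip z b"
  unfolding flip_def by (auto split: if_splits)

lemma flip_flip_ne: "flip (flip z a) b \<noteq> z \<or> a = b"
  unfolding flip_def by (auto split: if_splits)

lemma Gr_low:
  assumes "{P, Q} \<in> Gr n m r" "card Q = card P + 1"
  shows "lowgood m r P"
proof -
  obtain x j where xj: "{P,Q} = {x, insert j x}" "x \<subseteq> {..<n}" "j \<notin> x" "lowgood m r x"
    using assms(1) unfolding Gr_def by blast
  have fx: "finite x" using xj(2) finite_subset by blast
  from xj(1) have "(P = x \<and> Q = insert j x) \<or> (P = insert j x \<and> Q = x)"
    by (simp add: doubleton_eq_iff)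
  moreover have "\<not> (P = insert j x \<and> Q = x)"
  proof
    assume "P = insert j x \<and> Q = x"
    then have "card P = card Q + 1" using fx xj(3) by simp
    then show False using assms(2) by linarith
  qed
  ultimately show ?thesis using xj(4) by blast
qed

lemma arith_contra:
  fixes w m :: nat
  assumes "m \<ge> 1" and h: "\<forall>k<m. (w + k) mod (m+1) < m - 1"
  shows False
proof -
  define c where "c = w mod (m+1)"
  have cl: "c < m + 1" unfolding c_def by simp
  have eq: "\<And>k. (w + k) mod (m+1) = (c + k) mod (m+1)"
    unfolding c_def by (simp add: mod_add_left_eq)
  show False
  proof (cases "c = 0")
    case True
    have "(w + (m-1)) mod (m+1) = m - 1" using eq[of "m-1"] True by simp
    moreover have "m - 1 < m" using assms(1) by simp
    then have "(w + (m-1)) mod (m+1) < m - 1" using h by blast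
    ultimately show False by linarith
  next
    case False
    have "c + (m - c) = m" using cl by simp
    then have "(w + (m-c)) mod (m+1) = m" using eq[of "m-c"] by simp
    moreover have "m - c < m" using False cl by simp
    ultimately show False using h by fastforce
  qed
qed

lemma Gr_free:
  assumes m1: "m \<ge> 1" and cq: "contains_Qm n m (Gr n m r)"
  shows False
proof -
  obtain f where inj: "inj_on f (hcube_verts m)" and im: "f ` hcube_verts m \<subseteq> hcube_verts n"
    and ed: "\<forall>e\<in>hcube_edges m. f ` e \<in> Gr n m r"
    using cq unfolding contains_Qm_def by blast
  have fg: "{f S, f (flip S a)} \<in> Gr n m r" if "S \<subseteq> {..<m}" "a < m" for S a
  proof -
    have "f ` {S, flip S a} \<in> Gr n m r" using ed edgeQ[OF that] by blast
    then show ?thesis by simp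
  qed
  have fe: "{f S, f (flip S a)} \<in> hcube_edges n" if "S \<subseteq> {..<m}" "a < m" for S a
    using fg[OF that] Gr_sub by blast
  have injD: "f S \<noteq> f T" if "S \<subseteq> {..<m}" "T \<subseteq> {..<m}" "S \<noteq> T" for S T
    using inj that unfolding inj_on_def hcube_verts_def by blast
  obtain x0 where x0: "x0 \<subseteq> {..<m}" and mn: "\<And>y. y \<subseteq> {..<m} \<Longrightarrow> card (f x0) \<le> card (f y)"
    using ex_has_least_nat[of "\<lambda>x. x \<subseteq> {..<m}" "{}" "\<lambda>x. card (f x)"] by auto
  define w0 where "w0 = card (f x0)"
  have grade: "card (f z) = w0 + k" if "z \<subseteq> {..<m}" "card (symd z x0) = k" for k z
    using that
  proof (induction k arbitrary: z rule: less_induct)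
    case (less k z)
    have sdm: "symd z x0 \<subseteq> {..<m}" using symd_sub[OF less.prems(1) x0] .
    have fin: "finite (symd z x0)" using sdm finite_subset by blast
    show ?case
    proof (cases "k = 0")
      case True
      then have "symd z x0 = {}" using less.prems(2) fin by simp
      then have "z = x0" by (rule symd_empty)
      then show ?thesis using True w0_def by simp
    next
      case False
      then obtain a where a: "a \<in> symd z x0" using less.prems(2) by fastforce
      have am: "a < m" using a sdm by blast
      define y where "y = flip z a"
      have ym: "y \<subseteq> {..<m}" unfolding y_def using flip_sub less.prems(1) am by blast
      have sy: "symd y x0 = symd z x0 - {a}" unfolding y_def using symd_flip[OF a] .
      have cy0: "card (symd y x0) = k - 1" using sy fin a less.prems(2) by simp
      have cy: "card (f y) = w0 + (k - 1)"
        using less.IH[of "k-1" y] False ym cy0 by simp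
      have e: "{f z, f y} \<in> hcube_edges n" unfolding y_def using fe less.prems(1) am by blast
      have ec: "card (f y) = card (f z) + 1 \<or> card (f z) = card (f y) + 1"
        using edge_card[OF e] .
      show ?thesis
      proof (cases "k = 1")
        case True
        have "card (f x0) \<le> card (f z)" using mn less.prems(1) by blast
        then show ?thesis using ec cy True w0_def by linarith
      next
        case False
        then have k2: "k \<ge> 2" using \<open>k \<noteq> 0\<close> by simp
        then have "card (symd z x0 - {a}) \<ge> 1" using cy0 sy by simp
        then have "symd z x0 - {a} \<noteq> {}" by (metis card.empty not_one_le_zero)
        then obtain b where b: "b \<in> symd z x0 - {a}" by blast
        have bm: "b < m" using b sdm by blast
        have ab: "a \<noteq> b" using b by blast
        define y2 where "y2 = flip z b"
        define t where "t = flip y b"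
        have y2m: "y2 \<subseteq> {..<m}" unfolding y2_def using flip_sub less.prems(1) bm by blast
        have tm: "t \<subseteq> {..<m}" unfolding t_def using flip_sub ym bm by blast
        have sy2: "symd y2 x0 = symd z x0 - {b}" unfolding y2_def using symd_flip b by blast
        have cy20: "card (symd y2 x0) = k - 1" using sy2 fin b less.prems(2) by simp
        have cy2: "card (f y2) = w0 + (k - 1)"
          using less.IH[of "k-1" y2] k2 y2m cy20 by simp
        have st: "symd t x0 = symd z x0 - {a} - {b}" unfolding t_def
          using symd_flip[of b y x0] sy b by simp
        have ct0: "card (symd t x0) = k - 2" using st fin a b less.prems(2) by simp
        have ct: "card (f t) = w0 + (k - 2)"
          using less.IH[of "k-2" t] k2 tm ct0 by simp
        have t2: "t = flip y2 a" unfolding t_def y_def y2_def by (rule flip_comm)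
        have e1: "{f t, f y} \<in> hcube_edges n"
          using fe[OF ym bm] unfolding t_def by (subst insert_commute)
        have e2: "{f t, f y2} \<in> hcube_edges n"
          using fe[OF y2m am] unfolding t2 by (subst insert_commute)
        have e3: "{f y, f z} \<in> hcube_edges n"
          using e by (subst insert_commute)
        have e4': "{f z, f y2} \<in> hcube_edges n" unfolding y2_def using fe less.prems(1) bm by blast
        have e4: "{f y2, f z} \<in> hcube_edges n"
          using e4' by (subst insert_commute)
        have n1: "f y \<noteq> f y2"
          using injD[OF ym y2m] flip_ne[OF ab] unfolding y_def y2_def by blast
        have "t \<noteq> z" using flip_flip_ne[of z a b] ab unfolding t_def y_def by blast
        then have n2: "f z \<noteq> f t" using injD[OF less.prems(1) tm] by blast
        have "card (f z) = card (f t) + 2"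
          using square[OF e1 e2 e3 e4 _ _ n1 n2] cy cy2 ct k2 by simp
        then show ?thesis using ct k2 by simp
      qed
    qed
  qed
  define p where "p k = symd x0 {..<k}" for k
  have "\<forall>k<m. (card (f x0) + r + k) mod (m+1) < m - 1"
  proof (intro allI impI)
    fix k assume km: "k < m"
    have pm: "p k \<subseteq> {..<m}" unfolding p_def using symd_sub[OF x0, of "{..<k}"] km by auto
    have pSm: "p (Suc k) \<subseteq> {..<m}" unfolding p_def using symd_sub[OF x0, of "{..<Suc k}"] km by auto
    have pS: "p (Suc k) = flip (p k) k" unfolding p_def
      using symd_insert[of k "{..<k}" x0] by (simp add: lessThan_Suc)
    have c1: "card (f (p k)) = w0 + k"
      using grade[OF pm] unfolding p_def by (simp add: symd_symd)
    have c2: "card (f (p (Suc k))) = w0 + Suc k"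
      using grade[OF pSm] unfolding p_def by (simp add: symd_symd)
    have "{f (p k), f (p (Suc k))} \<in> Gr n m r" using fg[OF pm km] pS by simp
    then have "lowgood m r (f (p k))" using Gr_low c1 c2 by simp
    then show "(card (f x0) + r + k) mod (m+1) < m - 1"
      unfolding lowgood_def c1 w0_def by (simp add: ac_simps)
  qed
  then show False using arith_contra[OF m1] by blast
qed

lemma ext_sat:
  assumes "G \<subseteq> hcube_edges n" "\<not> contains_Qm n m G"
  shows "\<exists>H. G \<subseteq> H \<and> saturated n m H"
proof -
  let ?P = "\<lambda>H. G \<subseteq> H \<and> H \<subseteq> hcube_edges n \<and> \<not> contains_Qm n m H"
  have bnd: "\<forall>y. ?P y \<longrightarrow> card y < card (hcube_edges n) + 1"
    using card_mono[OF finite_edges] by (simp add: less_Suc_eq_le)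
  obtain H where H: "?P H" and mx: "\<And>y. ?P y \<Longrightarrow> card y \<le> card H"
    using ex_has_greatest_nat[of ?P G card "card (hcube_edges n) + 1", OF _ bnd] assms by blast
  have fH: "finite H" using H finite_edges finite_subset by blast
  have "saturated n m H"
    unfolding saturated_def
  proof (intro conjI ballI)
    show "H \<subseteq> hcube_edges n" using H by blast
    show "\<not> contains_Qm n m H" using H by blast
    fix e assume e: "e \<in> hcube_edges n - H"
    show "contains_Qm n m (insert e H)"
    proof (rule ccontr)
      assume "\<not> contains_Qm n m (insert e H)"
      then have "?P (insert e H)" using H e by blast
      then have "card (insert e H) \<le> card H" by (rule mx)
      moreover have "card (insert e H) = card H + 1" using fH e by simp
      ultimately show False by simp
    qed
  qed
  then show ?thesis using H by blast
qed

lemma cover: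
  assumes m2: "m \<ge> 2" and sc: "is_subcube n (m - 1) D a"
  defines "r \<equiv> (m+1) - card a mod (m+1)"
  shows "r \<in> {1..m+1}" "subcube_edges n D a \<subseteq> Gr n m r"
proof -
  show "r \<in> {1..m+1}" unfolding r_def by (simp add: Suc_le_eq)
  have Dn: "D \<subseteq> {..<n}" and cD: "card D = m - 1" and an: "a \<subseteq> {..<n} - D"
    using sc unfolding is_subcube_def by auto
  have fD: "finite D" using Dn finite_subset by blast
  have fa: "finite a" using an finite_subset by blast
  have ar: "(card a + r) mod (m+1) = 0"
  proof -
    have "card a = card a div (m+1) * (m+1) + card a mod (m+1)" by (rule div_mult_mod_eq[symmetric])
    moreover have "card a mod (m+1) < m + 1" by simp
    ultimately have "card a + r = (card a div (m+1) + 1) * (m+1)" unfolding r_def by simp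
    then have "(card a + r) mod (m+1) = ((card a div (m+1) + 1) * (m+1)) mod (m+1)" by (rule arg_cong)
    also have "\<dots> = 0" by (rule mod_mult_self2_is_0)
    finally show ?thesis .
  qed
  show "subcube_edges n D a \<subseteq> Gr n m r"
  proof
    fix e assume "e \<in> subcube_edges n D a"
    then obtain x j where xj: "e = {x, insert j x}" "x \<subseteq> {..<n}" "x - D = a" "j \<in> D" "j \<notin> x"
      unfolding subcube_edges_def by blast
    have jn: "j < n" using xj(4) Dn by blast
    have fx: "finite x" using xj(2) finite_subset by blast
    have xu: "x = a \<union> (x \<inter> D)" using xj(3) by blast
    have dj: "a \<inter> (x \<inter> D) = {}" using an by blast
    have cx: "card x = card a + card (x \<inter> D)"
    proof -
      have "card x = card (a \<union> (x \<inter> D))" by (rule arg_cong[OF xu])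
      also have "\<dots> = card a + card (x \<inter> D)"
        by (rule card_Un_disjoint[OF fa _ dj]) (simp add: fD)
      finally show ?thesis .
    qed
    have "x \<inter> D \<subseteq> D - {j}" using xj(5) by blast
    then have "card (x \<inter> D) \<le> card (D - {j})" using fD by (simp add: card_mono)
    also have "\<dots> = m - 2" using cD xj(4) fD by simp
    finally have sl: "card (x \<inter> D) < m - 1" using m2 by linarith
    have "(card x + r) mod (m+1) = (card (x \<inter> D) + (card a + r)) mod (m+1)"
      using cx by (simp add: ac_simps)
    also have "\<dots> = (card (x \<inter> D) + (card a + r) mod (m+1)) mod (m+1)"
      by (rule mod_add_right_eq[symmetric])
    also have "\<dots> = card (x \<inter> D) mod (m+1)" using ar by simp
    also have "\<dots> = card (x \<inter> D)" using sl by simp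
    finally have "lowgood m r x" unfolding lowgood_def using sl by simp
    then show "e \<in> Gr n m r" unfolding Gr_def using xj jn by blast
  qed
qed

theorem mainTheorem5:
  fixes m n0 :: nat
  assumes "m \<ge> 2" and "n0 \<ge> 1"
  shows "\<exists>A :: nat \<Rightarrow> nat set set set.
           (\<forall>i \<in> {1..m+1}. saturated n0 m (A i)) \<and>
           (\<forall>D a. is_subcube n0 (m - 1) D a \<longrightarrow>
              (\<exists>i \<in> {1..m+1}. subcube_edges n0 D a \<subseteq> A i))"
proof -
  define A where "A i = (SOME H. Gr n0 m i \<subseteq> H \<and> saturated n0 m H)" for i
  have AA: "Gr n0 m i \<subseteq> A i \<and> saturated n0 m (A i)" for i
  proof -
    have "\<exists>H. Gr n0 m i \<subseteq> H \<and> saturated n0 m H"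
      using ext_sat[OF Gr_sub] Gr_free[of m n0 i] assms(1) by fastforce
    then show ?thesis unfolding A_def by (rule someI_ex)
  qed
  show ?thesis
  proof (intro exI conjI ballI allI impI)
    show "\<And>i. saturated n0 m (A i)" using AA by blast
    fix D a assume sc: "is_subcube n0 (m - 1) D a"
    show "\<exists>i\<in>{1..m + 1}. subcube_edges n0 D a \<subseteq> A i"
      using cover[OF assms(1) sc] AA by blast
  qed
qed

end
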